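(* For any $p\in(0,1/2]$ there is $\gamma>0$ depending only on $p$ such that for every $\varepsilon\in(0,1]$, every $n\geq 2$, every $s\in\mathbb{R}$ and every $x\in S^{n-1}$, $$\mathbb{P}\big\{\|(B_n^1(p)+s\,1_{n-1}1_n^\top)x\|_2\leq \gamma\sqrt{\varepsilon n}\big\}\leq \Big(\frac{e}{\varepsilon}\Big)^{\varepsilon(n-1)}(1-p)^{(n-1)(1-\varepsilon)}.$$
   Context: $B_n(p)$ is the $n\times n$ random matrix with i.i.d. entries taking value $1$ with probability $p$ and $0$ with probability $1-p$; $B_n^1(p)$ is the $(n-1)\times n$ matrix obtained from $B_n(p)$ by removing the last row. $1_m$ is the $m$-dimensional vector of all ones; $S^{n-1}$ is the unit Euclidean sphere in $\mathbb{R}^n$. *)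

theory Defs
  imports "HOL-Probability.Probability"
begin

definition bernoulli_matrix :: "real \<Rightarrow> nat \<Rightarrow> nat \<Rightarrow> (nat \<times> nat \<Rightarrow> real) pmf" where
  "bernoulli_matrix p m n =
     Pi_pmf ({..<m} \<times> {..<n}) 0 (\<lambda>_. map_pmf (\<lambda>b. if b then 1 else 0) (bernoulli_pmf p))"

definition B1 :: "real \<Rightarrow> nat \<Rightarrow> (nat \<times> nat \<Rightarrow> real) pmf" where
  "B1 p n = bernoulli_matrix p (n - 1) n"

definition shifted_norm :: "nat \<Rightarrow> nat \<Rightarrow> (nat \<times> nat \<Rightarrow> real) \<Rightarrow> real \<Rightarrow> (nat \<Rightarrow> real) \<Rightarrow> real" where
  "shifted_norm m n M s x = sqrt (\<Sum>i<m. (\<Sum>j<n. (M (i, j) + s) * x j)^2)"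

end

theory Submission
  imports Defs
begin

lemma sum4: "(\<Sum>m::nat<4. f m) = f 0 + f 1 + f 2 + (f 3 :: real)"
  by (simp add: numeral_eq_Suc)
lemma sum2: "(\<Sum>m::nat<2. f m) = f 0 + (f 1 :: real)"
  by (simp add: numeral_eq_Suc)
lemma cos_ge_quad: "cos (x::real) \<ge> 1 - x^2/2"
proof -
  obtain t where "cos x = (\<Sum>m<2. cos_coeff m * x ^ m) + (cos(t + 1/2 * real 2 * pi) / fact 2) * x ^ 2"
    using Maclaurin_cos_expansion[of x 2] by blast
  then have "cos x = 1 - cos t / 2 * x^2"
    by (simp add: sum2 cos_coeff_def)
  moreover have "cos t * x^2 \<le> 1 * x^2" by (intro mult_right_mono) auto
  ultimately show ?thesis by simp
qed
lemma cos_le_quart: "cos (x::real) \<le> 1 - x^2/2 + x^4/24"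
proof -
  obtain t where "cos x = (\<Sum>m<4. cos_coeff m * x ^ m) + (cos(t + 1/2 * real 4 * pi) / fact 4) * x ^ 4"
    using Maclaurin_cos_expansion[of x 4] by blast
  then have "cos x = 1 - x^2/2 + cos t / 24 * x^4"
    by (simp add: sum4 cos_coeff_def fact_numeral)
  moreover have "cos t * x^4 \<le> 1 * x^4" by (intro mult_right_mono) auto
  ultimately show ?thesis by simp
qed
lemma one_minus_cos_ge: assumes "\<bar>x::real\<bar> \<le> 1" shows "1 - cos x \<ge> x^2/4"
proof -
  have "x^4 = x^2 * x^2" by algebra
  moreover have "x^2 \<le> 1" using assms by (simp add: abs_square_le_1)
  moreover have "x^2 * x^2 \<le> 1 * x^2" using \<open>x^2 \<le> 1\<close> by (intro mult_right_mono) auto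
  ultimately have "x^4 \<le> x^2" by simp
  then show ?thesis using cos_le_quart[of x] zero_le_power2[of x] by linarith
qed


definition Dp :: "real \<Rightarrow> real pmf" where
  "Dp p = map_pmf (\<lambda>b. if b then 1 else 0) (bernoulli_pmf p)"
definition rowp :: "real \<Rightarrow> nat \<Rightarrow> (nat \<Rightarrow> real) pmf" where
  "rowp p n = Pi_pmf {..<n} 0 (\<lambda>_. Dp p)"

lemma set_Dp: "set_pmf (Dp p) \<subseteq> {0,1}" by (auto simp: Dp_def)

lemma finite_rowp: "finite (set_pmf (rowp p n))"
  unfolding rowp_def
  by (rule finite_subset[OF set_Pi_pmf_subset'])
     (auto intro!: finite_PiE_dflt finite_subset[OF set_Dp])

lemma integral_Dp:
  fixes f :: "real \<Rightarrow> 'b::{banach, second_countable_topology}"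
  assumes "0 \<le> p" "p \<le> 1"
  shows "measure_pmf.expectation (Dp p) f = (1-p) *\<^sub>R f 0 + p *\<^sub>R f 1"
proof -
  have "measure_pmf.expectation (Dp p) f = measure_pmf.expectation (bernoulli_pmf p) (\<lambda>b. f (if b then 1 else 0))"
    by (simp add: Dp_def)
  also have "\<dots> = (\<Sum>b\<in>{True,False}. pmf (bernoulli_pmf p) b *\<^sub>R f (if b then 1 else 0))"
    by (rule integral_measure_pmf) auto
  finally show ?thesis using assms by (simp add: add.commute)
qed

lemma cis_sum: "finite A \<Longrightarrow> cis (\<Sum>j\<in>A. f j) = (\<Prod>j\<in>A. cis (f j))"
  by (induction A rule: finite_induct) (auto simp: cis_mult[symmetric])

lemma charfun_row:
  assumes "0 \<le> p" "p \<le> 1"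
  shows "cmod (measure_pmf.expectation (rowp p n) (\<lambda>r. cis (t * ((\<Sum>j<n. r j * x j) + c))))
         = (\<Prod>j<n. cmod (complex_of_real (1-p) + complex_of_real p * cis (t * x j)))"
proof -
  have eq: "cis (t * ((\<Sum>j<n. r j * x j) + c)) = cis (t*c) * (\<Prod>j<n. cis (t * x j * r j))" for r
  proof -
    have "t * ((\<Sum>j<n. r j * x j) + c) = t * c + (\<Sum>j<n. t * x j * r j)"
      by (simp add: sum_distrib_left algebra_simps)
    then show ?thesis by (simp add: cis_mult[symmetric] cis_sum)
  qed
  have ind0: "prob_space.indep_vars (measure_pmf (Pi_pmf {..<n} 0 (\<lambda>_. Dp p))) (\<lambda>_. borel) (\<lambda>j r. cis (t * x j * r j)) {..<n}"
    by (rule prob_space.indep_vars_compose2[OF measure_pmf.prob_space_axioms indep_vars_Pi_pmf,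
          where Y="\<lambda>j y. cis (t * x j * y)"]) auto
  then have ind: "prob_space.indep_vars (measure_pmf (rowp p n)) (\<lambda>_. borel) (\<lambda>j r. cis (t * x j * r j)) {..<n}"
    by (simp only: rowp_def)
  have int: "integrable (measure_pmf (rowp p n)) (\<lambda>r. cis (t * x j * r j))" for j
    by (rule integrable_measure_pmf_finite[OF finite_rowp])
  have "measure_pmf.expectation (rowp p n) (\<lambda>r. \<Prod>j<n. cis (t * x j * r j))
        = (\<Prod>j<n. measure_pmf.expectation (rowp p n) (\<lambda>r. cis (t * x j * r j)))"
    by (rule prob_space.indep_vars_lebesgue_integral[OF measure_pmf.prob_space_axioms _ ind int]) simp
  also have "\<dots> = (\<Prod>j<n. measure_pmf.expectation (Dp p) (\<lambda>y. cis (t * x j * y)))"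
  proof (intro prod.cong refl)
    fix j assume j: "j \<in> {..<n}"
    have m: "map_pmf (\<lambda>f. f j) (rowp p n) = Dp p"
      using j unfolding rowp_def by (subst Pi_pmf_component) auto
    have "measure_pmf.expectation (map_pmf (\<lambda>f. f j) (rowp p n)) (\<lambda>y. cis (t * x j * y))
       = measure_pmf.expectation (rowp p n) (\<lambda>r. cis (t * x j * r j))"
      by (rule integral_map_pmf)
    then show "measure_pmf.expectation (rowp p n) (\<lambda>r. cis (t * x j * r j)) =
               measure_pmf.expectation (Dp p) (\<lambda>y. cis (t * x j * y))"
      by (simp only: m)
  qed
  also have "\<dots> = (\<Prod>j<n. complex_of_real (1-p) + complex_of_real p * cis (t * x j))"
    using assms by (intro prod.cong refl) (simp add: integral_Dp scaleR_conv_of_real)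
  finally have *: "measure_pmf.expectation (rowp p n) (\<lambda>r. \<Prod>j<n. cis (t * x j * r j)) =
     (\<Prod>j<n. complex_of_real (1-p) + complex_of_real p * cis (t * x j))" .
  have "measure_pmf.expectation (rowp p n) (\<lambda>r. cis (t * ((\<Sum>j<n. r j * x j) + c)))
     = measure_pmf.expectation (rowp p n) (\<lambda>r. cis (t*c) * (\<Prod>j<n. cis (t * x j * r j)))"
    by (simp only: eq)
  also have "\<dots> = cis (t*c) * measure_pmf.expectation (rowp p n) (\<lambda>r. \<Prod>j<n. cis (t * x j * r j))"
    by (rule integral_mult_right_zero)
  finally show ?thesis
    by (simp only: * norm_mult norm_cis prod_norm mult_1)
qed

lemma cmod_bern:
  "(cmod (complex_of_real (1-p) + complex_of_real p * cis \<theta>))^2 = 1 - 2*p*(1-p)*(1 - cos \<theta>)"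
proof -
  have "(cmod (complex_of_real (1-p) + complex_of_real p * cis \<theta>))^2
      = ((1-p) + p * cos \<theta>)^2 + (p * sin \<theta>)^2"
    by (simp add: cmod_power2)
  also have "\<dots> = (1-p)^2 + 2*(1-p)*p*cos \<theta> + p^2 * ((sin \<theta>)^2 + (cos \<theta>)^2)"
    by algebra
  also have "\<dots> = (1-p)^2 + 2*(1-p)*p*cos \<theta> + p^2"
    by (simp add: sin_cos_squared_add)
  also have "\<dots> = 1 - 2*p*(1-p)*(1 - cos \<theta>)"
    by (simp add: power2_eq_square algebra_simps)
  finally show ?thesis .
qed

lemma bern_le1:
  assumes "0 \<le> p" "p \<le> 1"
  shows "cmod (complex_of_real (1-p) + complex_of_real p * cis \<theta>) \<le> 1"
proof -
  have "0 \<le> p*(1-p)*(1 - cos \<theta>)" using assms by auto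
  then have "(cmod (complex_of_real (1-p) + complex_of_real p * cis \<theta>))^2 \<le> 1^2"
    unfolding cmod_bern by simp
  then show ?thesis by (rule power2_le_imp_le) simp
qed

lemma bern_small:
  assumes "0 \<le> p" "p \<le> 1" "\<bar>\<theta>\<bar> \<le> 1"
  shows "(cmod (complex_of_real (1-p) + complex_of_real p * cis \<theta>))^2 \<le> exp (- (p*(1-p)*\<theta>^2/2))"
proof -
  have "p*(1-p)*(\<theta>^2/4) \<le> p*(1-p)*(1 - cos \<theta>)"
    using assms one_minus_cos_ge[OF assms(3)] by (intro mult_left_mono) auto
  then have "1 - 2*p*(1-p)*(1 - cos \<theta>) \<le> 1 + (- (p*(1-p)*\<theta>^2/2))" by simp
  also have "\<dots> \<le> exp (- (p*(1-p)*\<theta>^2/2))" by (rule exp_ge_add_one_self)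
  finally show ?thesis unfolding cmod_bern .
qed



definition bern :: "real \<Rightarrow> real \<Rightarrow> real" where
  "bern p \<theta> = cmod (complex_of_real (1-p) + complex_of_real p * cis \<theta>)"

lemma bern_nn: "0 \<le> bern p \<theta>" by (simp add: bern_def)
lemma bern_le1': "0 \<le> p \<Longrightarrow> p \<le> 1 \<Longrightarrow> bern p \<theta> \<le> 1"
  unfolding bern_def by (rule bern_le1)
lemma bern_small': "0 \<le> p \<Longrightarrow> p \<le> 1 \<Longrightarrow> \<bar>\<theta>\<bar> \<le> 1 \<Longrightarrow> (bern p \<theta>)^2 \<le> exp (- (p*(1-p)*\<theta>^2/2))"
  unfolding bern_def by (rule bern_small)
lemma charfun_row':
  assumes "0 \<le> p" "p \<le> 1"
  shows "cmod (measure_pmf.expectation (rowp p n) (\<lambda>r. cis (t * ((\<Sum>j<n. r j * x j) + c))))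
         = (\<Prod>j<n. bern p (t * x j))"
  unfolding bern_def by (rule charfun_row[OF assms])

lemma prod_bound:
  fixes n :: nat and x :: "nat \<Rightarrow> real"
  assumes p: "0 \<le> p" "p \<le> 1" and S: "S \<subseteq> {..<n}" and small: "\<And>j. j \<in> S \<Longrightarrow> \<bar>t * x j\<bar> \<le> 1"
  shows "(\<Prod>j<n. bern p (t * x j))^2 \<le> exp (- (p*(1-p)*t^2*(\<Sum>j\<in>S. (x j)^2)/2))"
proof -
  have fin: "finite S" using S by (rule finite_subset) simp
  have nn: "\<And>j. 0 \<le> bern p (t * x j)" by (rule bern_nn)
  have "(\<Prod>j<n. bern p (t * x j)) = (\<Prod>j\<in>{..<n}-S. bern p (t * x j)) * (\<Prod>j\<in>S. bern p (t * x j))"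
    by (rule prod.subset_diff[OF S]) simp
  also have "\<dots> \<le> 1 * (\<Prod>j\<in>S. bern p (t * x j))"
    by (intro mult_right_mono prod_le_1 prod_nonneg) (auto intro: bern_le1'[OF p] bern_nn)
  finally have le: "(\<Prod>j<n. bern p (t * x j)) \<le> (\<Prod>j\<in>S. bern p (t * x j))" by simp
  have "(\<Prod>j<n. bern p (t * x j))^2 \<le> (\<Prod>j\<in>S. bern p (t * x j))^2"
    by (intro power_mono le prod_nonneg) (auto intro: bern_nn)
  also have "\<dots> = (\<Prod>j\<in>S. (bern p (t * x j))^2)"
    by (simp add: prod_power_distrib)
  also have "\<dots> \<le> (\<Prod>j\<in>S. exp (- (p*(1-p)*(t * x j)^2/2)))"
    by (intro prod_mono conjI bern_small'[OF p] small) (auto intro: bern_nn)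
  also have "\<dots> = exp (\<Sum>j\<in>S. - (p*(1-p)*(t * x j)^2/2))"
    by (simp add: exp_sum fin)
  also have "(\<Sum>j\<in>S. - (p*(1-p)*(t * x j)^2/2)) = - (p*(1-p)*t^2*(\<Sum>j\<in>S. (x j)^2)/2)"
    by (simp add: sum_distrib_left sum_divide_distrib power_mult_distrib sum_negf mult.assoc)
  finally show ?thesis .
qed

lemma exp_neg_le: "0 \<le> (y::real) \<Longrightarrow> exp (- y) \<le> 1 / (1 + y)"
proof -
  assume y: "0 \<le> y"
  have "1 + y \<le> exp y" by (rule exp_ge_add_one_self)
  then have "1 / exp y \<le> 1 / (1 + y)" using y by (intro divide_left_mono) auto
  then show ?thesis by (simp add: exp_minus field_simps)
qed

lemma sum_if_4: "(\<Sum>k\<le>(3::nat). \<Sum>l\<le>(3::nat). (if k = l then 1 else 1/16::real)) = 19/4"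
  by (simp add: numeral_eq_Suc atMost_Suc)

lemma card_atMost_3: "card {..(3::nat)} = 4" by simp

lemma fourier:
  assumes p: "0 < p" "p < 1" and w: "0 < w" "w^2 * 10^6 \<le> p*(1-p)"
    and S: "S \<subseteq> {..<n}" and Sx: "\<And>j. j \<in> S \<Longrightarrow> \<bar>x j\<bar> \<le> 2*w"
    and Ssum: "(\<Sum>j\<in>S. (x j)^2) \<ge> 1/2"
  shows "measure_pmf.prob (rowp p n) {r. \<bar>(\<Sum>j<n. r j * x j) + c\<bar> < w} \<le> 1/2"
proof -
  define h where "h = 1 / (6*w)"
  define Z where "Z r = (\<Sum>j<n. r j * x j) + c" for r :: "nat \<Rightarrow> real"
  define K where "K z = (\<Sum>k\<le>(3::nat). cos (real k * h * z))^2 + (\<Sum>k\<le>(3::nat). sin (real k * h * z))^2" for z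
  define E where "E = {r. \<bar>Z r\<bar> < w}"
  have hpos: "h > 0" using w by (simp add: h_def)
  have Kexp: "K z = (\<Sum>k\<le>(3::nat). \<Sum>l\<le>(3::nat). cos ((real k - real l) * h * z))" for z
    unfolding K_def power2_eq_square sum_product
    by (simp add: sum.distrib[symmetric] cos_diff left_diff_distrib)
  have Klow: "12 \<le> K z" if z: "\<bar>z\<bar> < w" for z
  proof -
    have c: "7/8 \<le> cos (real k * h * z)" if k: "k \<in> {..(3::nat)}" for k
    proof -
      have "\<bar>real k * h * z\<bar> = real k * h * \<bar>z\<bar>" using hpos by (simp add: abs_mult)
      also have "\<dots> \<le> 3 * h * w"
        using k z hpos by (intro mult_mono) auto
      also have "\<dots> = 1/2" using w by (simp add: h_def)
      finally have a: "\<bar>real k * h * z\<bar> \<le> 1/2" .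
      have "(real k * h * z)^2 \<le> (1/2)^2"
        using a by (metis abs_ge_zero power2_abs power_mono)
      moreover have "(1/2::real)^2 = 1/4" by (simp add: power2_eq_square)
      ultimately have "(real k * h * z)^2 \<le> 1/4" by simp
      then show ?thesis using cos_ge_quad[of "real k * h * z"] by linarith
    qed
    have "real (card {..(3::nat)}) * (7/8) \<le> (\<Sum>k\<le>(3::nat). cos (real k * h * z))"
      by (rule sum_bounded_below) (rule c)
    then have s: "7/2 \<le> (\<Sum>k\<le>(3::nat). cos (real k * h * z))" by simp
    have "(7/2)^2 \<le> (\<Sum>k\<le>(3::nat). cos (real k * h * z))^2"
      by (rule power_mono[OF s]) simp
    moreover have "(7/2::real)^2 = 49/4" by (simp add: power2_eq_square)
    moreover have "0 \<le> (\<Sum>k\<le>(3::nat). sin (real k * h * z))^2" by simp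
    ultimately show ?thesis unfolding K_def by linarith
  qed
  have Knn: "0 \<le> K z" for z unfolding K_def by simp
  have intg: "integrable (measure_pmf (rowp p n)) f" for f :: "(nat \<Rightarrow> real) \<Rightarrow> real"
    by (rule integrable_measure_pmf_finite[OF finite_rowp])
  have intgc: "integrable (measure_pmf (rowp p n)) f" for f :: "(nat \<Rightarrow> real) \<Rightarrow> complex"
    by (rule integrable_measure_pmf_finite[OF finite_rowp])
  have "12 * measure_pmf.prob (rowp p n) E = measure_pmf.expectation (rowp p n) (\<lambda>r. 12 * indicator E r)"
    by simp
  also have "\<dots> \<le> measure_pmf.expectation (rowp p n) (\<lambda>r. K (Z r))"
  proof (rule integral_mono[OF intg intg])
    fix r show "12 * indicator E r \<le> K (Z r)"
      using Klow[of "Z r"] Knn[of "Z r"] by (auto simp: E_def indicator_def)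
  qed
  also have "\<dots> = measure_pmf.expectation (rowp p n) (\<lambda>r. \<Sum>k\<le>(3::nat). \<Sum>l\<le>(3::nat). cos ((real k - real l) * h * Z r))"
    by (simp only: Kexp)
  also have "\<dots> = (\<Sum>k\<le>(3::nat). measure_pmf.expectation (rowp p n) (\<lambda>r. \<Sum>l\<le>(3::nat). cos ((real k - real l) * h * Z r)))"
    by (rule Bochner_Integration.integral_sum) (rule intg)
  also have "\<dots> = (\<Sum>k\<le>(3::nat). \<Sum>l\<le>(3::nat).
                 measure_pmf.expectation (rowp p n) (\<lambda>r. cos ((real k - real l) * h * Z r)))"
    by (intro sum.cong refl Bochner_Integration.integral_sum intg)
  also have "\<dots> \<le> (\<Sum>k\<le>(3::nat). \<Sum>l\<le>(3::nat). (if k = l then 1 else 1/16::real))"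
  proof (intro sum_mono)
    fix k l :: nat assume kl: "k \<in> {..3}" "l \<in> {..3}"
    define t where "t = (real k - real l) * h"
    have "measure_pmf.expectation (rowp p n) (\<lambda>r. cos (t * Z r))
        = Re (measure_pmf.expectation (rowp p n) (\<lambda>r. cis (t * Z r)))"
    proof -
      have "(\<lambda>r. cos (t * Z r)) = (\<lambda>r. Re (cis (t * Z r)))" by simp
      then show ?thesis
        using integral_bounded_linear[OF bounded_linear_Re intgc, of "\<lambda>r. cis (t * Z r)"] by simp
    qed
    also have "\<dots> \<le> cmod (measure_pmf.expectation (rowp p n) (\<lambda>r. cis (t * Z r)))"
      by (rule complex_Re_le_cmod)
    also have "\<dots> = (\<Prod>j<n. bern p (t * x j))"
      unfolding Z_def by (rule charfun_row') (use p in auto)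
    finally have ec: "measure_pmf.expectation (rowp p n) (\<lambda>r. cos (t * Z r)) \<le> (\<Prod>j<n. bern p (t * x j))" .
    have le1: "(\<Prod>j<n. bern p (t * x j)) \<le> 1"
      by (intro prod_le_1) (use p bern_le1' bern_nn in auto)
    show "measure_pmf.expectation (rowp p n) (\<lambda>r. cos ((real k - real l) * h * Z r))
          \<le> (if k = l then 1 else 1/16)"
    proof (cases "k = l")
      case True then show ?thesis using ec le1 by (simp add: t_def)
    next
      case False
      have d1: "1 \<le> \<bar>real k - real l\<bar>" using False by linarith
      have d3: "\<bar>real k - real l\<bar> \<le> 3" using kl by auto
      have tabs: "\<bar>t\<bar> = \<bar>real k - real l\<bar> * h" using hpos by (simp add: t_def abs_mult)
      have "h^2 \<le> t^2"
      proof -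
        have "h \<le> \<bar>t\<bar>" using d1 hpos tabs by (simp add: mult_le_cancel_right1)
        then have "h^2 \<le> \<bar>t\<bar>^2" using hpos by (intro power_mono) auto
        then show ?thesis by simp
      qed
      have small: "\<bar>t * x j\<bar> \<le> 1" if j: "j \<in> S" for j
      proof -
        have "\<bar>t * x j\<bar> = \<bar>t\<bar> * \<bar>x j\<bar>" by (simp add: abs_mult)
        also have "\<dots> \<le> (3 * h) * (2 * w)"
          using d3 Sx[OF j] hpos tabs by (intro mult_mono) auto
        also have "\<dots> = 1" using w by (simp add: h_def)
        finally show ?thesis .
      qed
      have pq: "0 < p*(1-p)" using p by simp
      have "(\<Prod>j<n. bern p (t * x j))^2 \<le> exp (- (p*(1-p)*t^2*(\<Sum>j\<in>S. (x j)^2)/2))"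
        by (rule prod_bound[OF _ _ S small]) (use p in auto)
      also have "\<dots> \<le> exp (- (p*(1-p)*h^2/4))"
      proof -
        have "p*(1-p)*h^2*(1/2) \<le> p*(1-p)*t^2*(\<Sum>j\<in>S. (x j)^2)"
          using p pq \<open>h^2 \<le> t^2\<close> Ssum by (intro mult_mono) auto
        then show ?thesis by simp
      qed
      also have "\<dots> \<le> 1 / (1 + p*(1-p)*h^2/4)"
        using pq by (intro exp_neg_le) auto
      also have "\<dots> \<le> 1 / 256"
      proof -
        have "p*(1-p)*h^2 = p*(1-p) / (36 * w^2)" by (simp add: h_def power2_eq_square)
        also have "\<dots> \<ge> 10^6 / 36"
        proof -
          have "10^6 * w^2 \<le> p*(1-p)" using w(2) by (simp add: mult.commute)
          then have "(10^6 * w^2) / (36 * w^2) \<le> p*(1-p) / (36 * w^2)"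
            by (rule divide_right_mono) simp
          moreover have "(10^6 * w^2) / (36 * w^2) = (10^6 / 36 :: real)" using w(1) by simp
          ultimately show ?thesis by simp
        qed
        finally have "p*(1-p)*h^2 \<ge> 10^6 / 36" .
        then have "256 \<le> 1 + p*(1-p)*h^2/4" by simp
        then show ?thesis by (intro divide_left_mono) auto
      qed
      finally have "(\<Prod>j<n. bern p (t * x j))^2 \<le> 1/256" .
      then have "(\<Prod>j<n. bern p (t * x j))^2 \<le> (1/16)^2" by (simp add: power2_eq_square)
      then have "(\<Prod>j<n. bern p (t * x j)) \<le> 1/16"
        by (rule power2_le_imp_le) simp
      then show ?thesis using ec False by (simp add: t_def)
    qed
  qed
  also have "\<dots> = 19/4" by (rule sum_if_4)
  finally have "12 * measure_pmf.prob (rowp p n) E \<le> 19/4" .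
  then show ?thesis by (simp add: E_def Z_def)
qed



lemma sum_upd:
  fixes x :: "nat \<Rightarrow> real" and f :: "nat \<Rightarrow> real"
  assumes "j0 < n"
  shows "(\<Sum>j<n. (f(j0 := y)) j * x j) = (\<Sum>j\<in>{..<n}-{j0}. f j * x j) + y * x j0"
proof -
  have "(\<Sum>j<n. (f(j0 := y)) j * x j) = (f(j0 := y)) j0 * x j0 + (\<Sum>j\<in>{..<n}-{j0}. (f(j0 := y)) j * x j)"
    using assms by (intro sum.remove) auto
  also have "(\<Sum>j\<in>{..<n}-{j0}. (f(j0 := y)) j * x j) = (\<Sum>j\<in>{..<n}-{j0}. f j * x j)"
    by (intro sum.cong) auto
  finally show ?thesis by simp
qed

lemma caseA:
  fixes x :: "nat \<Rightarrow> real" and n :: nat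
  assumes p: "0 \<le> p" "p \<le> 1/2" and j0: "j0 < n" and big: "2*w \<le> \<bar>x j0\<bar>"
  shows "measure_pmf.prob (rowp p n) {r. \<bar>(\<Sum>j<n. r j * x j) + c\<bar> < w} \<le> 1 - p"
proof -
  define A where "A = {..<n} - {j0}"
  define Q where "Q = Pi_pmf A (0::real) (\<lambda>_. Dp p)"
  define E where "E = {r. \<bar>(\<Sum>j<n. r j * x j) + c\<bar> < w}"
  define K where "K y = bind_pmf Q (\<lambda>f. return_pmf (f(j0 := y)))" for y :: real
  have finA: "finite A" by (simp add: A_def)
  have ins: "{..<n} = insert j0 A" using j0 by (auto simp: A_def)
  have finQ: "finite (set_pmf Q)"
    unfolding Q_def
    by (rule finite_subset[OF set_Pi_pmf_subset'[OF finA]])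
       (auto intro!: finite_PiE_dflt finA finite_subset[OF set_Dp])
  have "rowp p n = Pi_pmf (insert j0 A) 0 (\<lambda>_. Dp p)" by (simp add: rowp_def ins)
  also have "\<dots> = bind_pmf (Dp p) K"
    unfolding K_def Q_def by (rule Pi_pmf_insert') (auto simp: finA A_def)
  also have "\<dots> = bind_pmf (bernoulli_pmf p) (\<lambda>b. K (if b then 1 else 0))"
    by (simp add: Dp_def bind_map_pmf)
  finally have R: "rowp p n = bind_pmf (bernoulli_pmf p) (\<lambda>b. K (if b then 1 else 0))" .
  have Kmap: "K y = map_pmf (\<lambda>f. f(j0 := y)) Q" for y by (simp add: K_def map_pmf_def)
  have finK: "finite (set_pmf (K y))" for y using finQ by (simp add: Kmap)
  have "measure_pmf.prob (rowp p n) E = measure_pmf.expectation (rowp p n) (indicator E)"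
    by simp
  also have "\<dots> = (\<Sum>b\<in>{True,False}. pmf (bernoulli_pmf p) b *\<^sub>R
                      measure_pmf.expectation (K (if b then 1 else 0)) (indicator E))"
    unfolding R by (rule pmf_expectation_bind) (auto simp: finK)
  also have "\<dots> = p * measure_pmf.prob Q {f. f(j0 := 1) \<in> E} + (1-p) * measure_pmf.prob Q {f. f(j0 := 0) \<in> E}"
    using p by (simp add: Kmap vimage_def)
  finally have eq: "measure_pmf.prob (rowp p n) E =
      p * measure_pmf.prob Q {f. f(j0 := 1) \<in> E} + (1-p) * measure_pmf.prob Q {f. f(j0 := 0) \<in> E}" .
  have disj: "{f. f(j0 := 1) \<in> E} \<inter> {f. f(j0 := 0) \<in> E} = {}"
  proof (rule ccontr)
    assume "{f. f(j0 := 1) \<in> E} \<inter> {f. f(j0 := 0) \<in> E} \<noteq> {}"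
    then obtain f where f1: "f(j0 := 1) \<in> E" and f0: "f(j0 := 0) \<in> E" by blast
    define s where "s = (\<Sum>j\<in>{..<n}-{j0}. f j * x j)"
    have "\<bar>s + x j0 + c\<bar> < w" using f1 sum_upd[OF j0, of f 1 x] by (simp add: E_def s_def)
    moreover have "\<bar>s + c\<bar> < w" using f0 sum_upd[OF j0, of f 0 x] by (simp add: E_def s_def)
    ultimately show False using big by linarith
  qed
  have "measure_pmf.prob Q {f. f(j0 := 1) \<in> E} + measure_pmf.prob Q {f. f(j0 := 0) \<in> E}
        = measure_pmf.prob Q ({f. f(j0 := 1) \<in> E} \<union> {f. f(j0 := 0) \<in> E})"
    using disj by (intro measure_pmf.finite_measure_Union[symmetric]) auto
  also have "\<dots> \<le> 1" by simp
  finally have s1: "measure_pmf.prob Q {f. f(j0 := 1) \<in> E} + measure_pmf.prob Q {f. f(j0 := 0) \<in> E} \<le> 1" .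
  have "p * measure_pmf.prob Q {f. f(j0 := 1) \<in> E} \<le> (1-p) * measure_pmf.prob Q {f. f(j0 := 1) \<in> E}"
    using p by (intro mult_right_mono) auto
  then have "measure_pmf.prob (rowp p n) E \<le> (1-p) * (measure_pmf.prob Q {f. f(j0 := 1) \<in> E} + measure_pmf.prob Q {f. f(j0 := 0) \<in> E})"
    unfolding eq by (simp add: algebra_simps)
  also have "\<dots> \<le> (1-p) * 1"
    using p s1 by (intro mult_left_mono) auto
  finally show ?thesis by (simp add: E_def)
qed

lemma row_bound:
  assumes p: "0 < p" "p \<le> 1/2"
  shows "\<exists>w>0. \<forall>n (x::nat \<Rightarrow> real) c. (\<Sum>j<n. (x j)^2) = 1 \<longrightarrow>
           measure_pmf.prob (rowp p n) {r. \<bar>(\<Sum>j<n. r j * x j) + c\<bar> < w} \<le> 1 - p"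
proof -
  define w where "w = sqrt (p*(1-p)) / 1000"
  have pq: "0 < p*(1-p)" using p by simp
  have wpos: "0 < w" using pq by (simp add: w_def)
  have w2: "w^2 * 10^6 \<le> p*(1-p)" using pq by (simp add: w_def power_divide)
  show ?thesis
  proof (intro exI[of _ w] conjI allI impI wpos)
    fix n and x :: "nat \<Rightarrow> real" and c assume x1: "(\<Sum>j<n. (x j)^2) = 1"
    define S where "S = {j\<in>{..<n}. \<bar>x j\<bar> \<le> 2*w}"
    show "measure_pmf.prob (rowp p n) {r. \<bar>(\<Sum>j<n. r j * x j) + c\<bar> < w} \<le> 1 - p"
    proof (cases "(\<Sum>j\<in>S. (x j)^2) \<ge> 1/2")
      case True
      have "measure_pmf.prob (rowp p n) {r. \<bar>(\<Sum>j<n. r j * x j) + c\<bar> < w} \<le> 1/2"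
        by (rule fourier[OF _ _ wpos w2, of S n x]) (use p True in \<open>auto simp: S_def\<close>)
      then show ?thesis using p by simp
    next
      case False
      have "(\<Sum>j<n. (x j)^2) = (\<Sum>j\<in>{..<n}-S. (x j)^2) + (\<Sum>j\<in>S. (x j)^2)"
        by (rule sum.subset_diff) (auto simp: S_def)
      then have "(\<Sum>j\<in>{..<n}-S. (x j)^2) \<noteq> 0" using False x1 by linarith
      then obtain j0 where "j0 \<in> {..<n}-S" by (meson sum.neutral)
      then have j0: "j0 < n" and big: "2*w \<le> \<bar>x j0\<bar>" by (auto simp: S_def)
      show ?thesis using caseA[of p j0 n w x c] p j0 big by simp
    qed
  qed
qed



lemma nested:
  fixes D :: "real pmf" and A B :: "nat set"
  assumes A: "finite A" and B: "finite B"
  shows "Pi_pmf (A \<times> B) 0 (\<lambda>_. D) =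
         map_pmf (\<lambda>R ij. R (fst ij) (snd ij)) (Pi_pmf A (\<lambda>_. 0) (\<lambda>_. Pi_pmf B 0 (\<lambda>_. D)))"
proof (rule pmf_eqI)
  fix M :: "nat \<times> nat \<Rightarrow> real"
  define u :: "(nat \<Rightarrow> nat \<Rightarrow> real) \<Rightarrow> nat \<times> nat \<Rightarrow> real" where "u R ij = R (fst ij) (snd ij)" for R ij
  have inj: "inj u"
  proof (rule injI)
    fix R1 R2 assume "u R1 = u R2"
    then have "R1 i j = R2 i j" for i j by (metis u_def fst_conv snd_conv)
    then show "R1 = R2" by (intro ext)
  qed
  have u_eq: "u = (\<lambda>R ij. R (fst ij) (snd ij))" by (intro ext) (simp add: u_def)
  have Mu: "M = u (\<lambda>i j. M (i, j))" by (intro ext) (simp add: u_def)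
  have "pmf (map_pmf u (Pi_pmf A (\<lambda>_. 0) (\<lambda>_. Pi_pmf B 0 (\<lambda>_. D)))) M
      = pmf (Pi_pmf A (\<lambda>_. 0) (\<lambda>_. Pi_pmf B 0 (\<lambda>_. D))) (\<lambda>i j. M (i, j))"
    by (subst Mu, rule pmf_map_inj'[OF inj])
  also have "\<dots> = (if \<forall>i. i \<notin> A \<longrightarrow> (\<lambda>j. M (i, j)) = (\<lambda>_. 0)
                   then \<Prod>i\<in>A. (if \<forall>j. j \<notin> B \<longrightarrow> M (i, j) = 0 then \<Prod>j\<in>B. pmf D (M (i, j)) else 0)
                   else 0)"
    by (simp only: pmf_Pi[OF A] pmf_Pi[OF B])
  also have "\<dots> = pmf (Pi_pmf (A \<times> B) 0 (\<lambda>_. D)) M"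
  proof (cases "\<forall>ij. ij \<notin> A \<times> B \<longrightarrow> M ij = 0")
    case True
    then have c1: "\<forall>i. i \<notin> A \<longrightarrow> (\<lambda>j. M (i, j)) = (\<lambda>_. 0)" by auto
    have "(\<Prod>i\<in>A. (if \<forall>j. j \<notin> B \<longrightarrow> M (i, j) = 0 then \<Prod>j\<in>B. pmf D (M (i, j)) else 0))
          = (\<Prod>i\<in>A. \<Prod>j\<in>B. pmf D (M (i, j)))"
      using True by (intro prod.cong) auto
    also have "\<dots> = (\<Prod>ij\<in>A \<times> B. pmf D (M ij))"
      by (simp add: prod.cartesian_product case_prod_beta')
    finally show ?thesis using True c1 A B by (simp add: pmf_Pi)
  next
    case False
    then obtain i j where ij: "(i, j) \<notin> A \<times> B" "M (i, j) \<noteq> 0" by auto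
    have "(if \<forall>i. i \<notin> A \<longrightarrow> (\<lambda>j. M (i, j)) = (\<lambda>_. 0)
                   then \<Prod>i\<in>A. (if \<forall>j. j \<notin> B \<longrightarrow> M (i, j) = 0 then \<Prod>j\<in>B. pmf D (M (i, j)) else 0)
                   else 0) = 0"
    proof (cases "i \<in> A")
      case True
      then have "j \<notin> B" using ij by auto
      then have z: "(if \<forall>j. j \<notin> B \<longrightarrow> M (i, j) = 0 then \<Prod>j\<in>B. pmf D (M (i, j)) else 0) = 0"
        using ij by auto
      have "(\<Prod>i\<in>A. (if \<forall>j. j \<notin> B \<longrightarrow> M (i, j) = 0 then \<Prod>j\<in>B. pmf D (M (i, j)) else 0)) = 0"
        by (rule prod_zero[OF A], rule bexI[where x=i]) (use z True in simp_all)
      then show ?thesis by simp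
    next
      case False
      then have "\<not> (\<forall>i. i \<notin> A \<longrightarrow> (\<lambda>j. M (i, j)) = (\<lambda>_. 0))"
        using ij by (metis (mono_tags, lifting))
      then show ?thesis by (rule if_not_P)
    qed
    moreover have "pmf (Pi_pmf (A \<times> B) 0 (\<lambda>_. D)) M = 0"
      using False A B by (intro pmf_Pi_outside) auto
    ultimately show ?thesis by simp
  qed
  finally show "pmf (Pi_pmf (A \<times> B) 0 (\<lambda>_. D)) M =
      pmf (map_pmf (\<lambda>R ij. R (fst ij) (snd ij)) (Pi_pmf A (\<lambda>_. 0) (\<lambda>_. Pi_pmf B 0 (\<lambda>_. D)))) M"
    unfolding u_eq by (rule sym)
qed

lemma rows_indep:
  assumes G: "G \<subseteq> {..<m}"
  shows "measure_pmf.prob (bernoulli_matrix p m n) {M. \<forall>i\<in>G. (\<lambda>j. M (i, j)) \<in> X}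
         = measure_pmf.prob (rowp p n) X ^ card G"
proof -
  define P where "P = Pi_pmf {..<m} (\<lambda>_. 0) (\<lambda>_. rowp p n)"
  have "bernoulli_matrix p m n = map_pmf (\<lambda>R ij. R (fst ij) (snd ij)) P"
    unfolding bernoulli_matrix_def P_def rowp_def Dp_def[symmetric]
    by (rule nested) auto
  then have "measure_pmf.prob (bernoulli_matrix p m n) {M. \<forall>i\<in>G. (\<lambda>j. M (i, j)) \<in> X}
       = measure_pmf.prob P {R. \<forall>i\<in>G. R i \<in> X}"
    by (simp add: vimage_def)
  also have "{R. \<forall>i\<in>G. R i \<in> X} = Pi {..<m} (\<lambda>i. if i \<in> G then X else UNIV)"
    using G by (auto simp: Pi_def)
  also have "measure_pmf.prob P \<dots> = (\<Prod>i<m. measure_pmf.prob (rowp p n) (if i \<in> G then X else UNIV))"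
    unfolding P_def by (rule measure_Pi_pmf_Pi) simp
  also have "\<dots> = (\<Prod>i<m. if i \<in> G then measure_pmf.prob (rowp p n) X else 1)"
    by (intro prod.cong) auto
  also have "\<dots> = (\<Prod>i\<in>G. measure_pmf.prob (rowp p n) X)"
    using G by (simp add: prod.If_cases Int_absorb1)
  also have "\<dots> = measure_pmf.prob (rowp p n) X ^ card G" by simp
  finally show ?thesis .
qed

lemma exp_ge_pow_fact: "0 \<le> (y::real) \<Longrightarrow> y^k / fact k \<le> exp y"
proof -
  assume y: "0 \<le> y"
  have "(\<lambda>n. y^n /\<^sub>R fact n) sums exp y" by (rule exp_converges)
  then have s: "summable (\<lambda>n. y^n /\<^sub>R fact n)" and e: "exp y = (\<Sum>n. y^n /\<^sub>R fact n)"
    by (auto simp: sums_iff)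
  have "(\<Sum>n\<in>{k}. y^n /\<^sub>R fact n) \<le> (\<Sum>n. y^n /\<^sub>R fact n)"
    by (rule sum_le_suminf[OF s]) (use y in auto)
  then show ?thesis using e by (simp add: divide_inverse_commute)
qed

lemma choose_fact_le: "k \<le> m \<Longrightarrow> fact k * (m choose k) \<le> (m::nat)^k"
proof -
  assume km: "k \<le> m"
  have eq: "fact k * (m choose k) * fact (m - k) = (fact m :: nat)"
    using binomial_fact_lemma[OF km] by (simp add: algebra_simps)
  have dv: "fact (m - k) dvd (fact m :: nat)" by (simp add: fact_dvd)
  have "fact m = (fact m div fact (m - k)) * (fact (m - k) :: nat)" using dv by simp
  also have "\<dots> \<le> m^k * fact (m - k)"
    by (intro mult_right_mono fact_div_fact_le_pow km) simp
  finally have "fact k * (m choose k) * fact (m - k) \<le> m^k * (fact (m - k) :: nat)" using eq by simp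
  then show ?thesis by simp
qed

lemma binom_bound:
  assumes e: "0 < \<epsilon>" "\<epsilon> \<le> 1" and k: "k = nat \<lfloor>\<epsilon> * real m\<rfloor>"
  shows "real (m choose k) \<le> (exp 1 / \<epsilon>) powr (\<epsilon> * real m)"
proof -
  define T where "T = \<epsilon> * real m"
  have T0: "0 \<le> T" using e by (simp add: T_def)
  have kT: "real k \<le> T" using k T0 by (simp add: T_def of_nat_floor)
  have Tm: "T \<le> real m" using e by (simp add: T_def mult_left_le_one_le)
  have km: "k \<le> m" using kT Tm by linarith
  have base: "1 \<le> exp 1 / \<epsilon>"
  proof -
    have "1 \<le> exp (1::real)" by simp
    also have "\<dots> \<le> exp 1 / \<epsilon>" using e by (simp add: le_divide_eq)
    finally show ?thesis .
  qed
  show ?thesis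
  proof (cases "k = 0")
    case True
    then show ?thesis using base T0 by (simp add: T_def ge_one_powr_ge_zero)
  next
    case False
    then have k1: "1 \<le> real k" by simp
    have T1: "1 \<le> T" using k1 kT by linarith
    have m1: "1 \<le> real m" using T1 Tm by linarith
    have "fact k * real (m choose k) \<le> real m ^ k"
      using choose_fact_le[OF km] by (metis of_nat_fact of_nat_le_iff of_nat_mult of_nat_power)
    then have c1: "real (m choose k) \<le> real m ^ k / fact k"
      by (simp add: field_simps)
    have "real k ^ k / fact k \<le> exp (real k)" by (rule exp_ge_pow_fact) simp
    then have "real k ^ k \<le> exp (real k) * fact k" by (simp add: divide_le_eq)
    then have "1 / fact k \<le> exp (real k) / real k ^ k"
      using k1 by (simp add: field_simps)
    then have "real m ^ k / fact k \<le> real m ^ k * (exp (real k) / real k ^ k)"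
      by (simp add: divide_inverse mult_left_mono)
    also have "\<dots> = (exp 1 * real m / real k) ^ k"
      by (simp add: power_divide power_mult_distrib exp_of_nat_mult[symmetric])
    finally have c2: "real (m choose k) \<le> (exp 1 * real m / real k) ^ k" using c1 by linarith
    have pos: "0 < exp 1 * real m / real k" using m1 k1 by simp
    have "(exp 1 * real m / real k) ^ k = (exp 1 * real m / real k) powr real k"
      using powr_realpow[OF pos, of k] by simp
    also have "\<dots> = exp (real k * ln (exp 1 * real m / real k))"
      using pos m1 k1 unfolding powr_def by simp
    also have "ln (exp 1 * real m / real k) = 1 + ln (real m) - ln (real k)"
      using m1 k1 by (simp add: ln_div ln_mult)
    finally have c3: "(exp 1 * real m / real k) ^ k = exp (real k * (1 + ln (real m) - ln (real k)))" .
    have "(exp 1 / \<epsilon>) powr T = exp (T * ln (exp 1 / \<epsilon>))"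
      using base e by (simp add: powr_def)
    also have "ln (exp 1 / \<epsilon>) = 1 + ln (real m) - ln T"
      using e m1 by (simp add: ln_div T_def ln_mult)
    finally have c4: "(exp 1 / \<epsilon>) powr T = exp (T * (1 + ln (real m) - ln T))" .
    have F1: "real k * (ln T - ln (real k)) \<le> T - real k"
    proof -
      have "ln (T / real k) \<le> T / real k - 1" using k1 T1 by (intro ln_le_minus_one) simp
      then have "real k * ln (T / real k) \<le> real k * (T / real k - 1)"
        using k1 by (intro mult_left_mono) auto
      also have "\<dots> = T - real k" using k1 by (simp add: field_simps)
      finally show ?thesis using k1 T1 by (simp add: ln_div)
    qed
    have F2: "0 \<le> (T - real k) * (ln (real m) - ln T)"
      using kT Tm T1 by (intro mult_nonneg_nonneg) auto
    have "real k * (1 + ln (real m) - ln (real k)) \<le> T * (1 + ln (real m) - ln T)"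
      using F1 F2 by (simp add: algebra_simps)
    then have "(exp 1 * real m / real k) ^ k \<le> (exp 1 / \<epsilon>) powr T"
      unfolding c3 c4 by simp
    then show ?thesis using c2 by (simp add: T_def)
  qed
qed



theorem lemma3p4:
  fixes p :: real
  assumes "0 < p" and "p \<le> 1/2"
  shows "\<exists>\<gamma>>0. \<forall>\<epsilon> (n::nat) (s::real) (x::nat \<Rightarrow> real).
           0 < \<epsilon> \<and> \<epsilon> \<le> 1 \<and> 2 \<le> n \<and> (\<Sum>j<n. (x j)^2) = 1 \<longrightarrow>
           measure_pmf.prob (B1 p n)
             {M. shifted_norm (n - 1) n M s x \<le> \<gamma> * sqrt (\<epsilon> * real n)}
           \<le> (exp 1 / \<epsilon>) powr (\<epsilon> * (real n - 1)) * (1 - p) powr ((real n - 1) * (1 - \<epsilon>))"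
proof -
  obtain w where wpos: "w > 0" and row: "\<And>n (x::nat \<Rightarrow> real) c. (\<Sum>j<n. (x j)^2) = 1 \<Longrightarrow>
           measure_pmf.prob (rowp p n) {r. \<bar>(\<Sum>j<n. r j * x j) + c\<bar> < w} \<le> 1 - p"
    using row_bound[OF assms] by blast
  show ?thesis
  proof (intro exI[of _ "w/2"] conjI allI impI)
    show "0 < w/2" using wpos by simp
    fix \<epsilon> :: real and n :: nat and s :: real and x :: "nat \<Rightarrow> real"
    assume H: "0 < \<epsilon> \<and> \<epsilon> \<le> 1 \<and> 2 \<le> n \<and> (\<Sum>j<n. (x j)^2) = 1"
    then have e0: "0 < \<epsilon>" and e1: "\<epsilon> \<le> 1" and n2: "2 \<le> n" and x1: "(\<Sum>j<n. (x j)^2) = 1" by auto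
    define m where "m = n - 1"
    have rm: "real m = real n - 1" using n2 by (simp add: m_def of_nat_diff)
    define c where "c = s * (\<Sum>j<n. x j)"
    define X where "X = {r. \<bar>(\<Sum>j<n. r j * x j) + c\<bar> < w}"
    define a where "a = measure_pmf.prob (rowp p n) X"
    have a1: "a \<le> 1 - p" unfolding a_def X_def by (rule row[OF x1])
    have a0: "0 \<le> a" by (simp add: a_def)
    define Y where "Y M i = (\<Sum>j<n. (M (i, j) + s) * x j)" for M :: "nat \<times> nat \<Rightarrow> real" and i
    have Yeq: "Y M i = (\<Sum>j<n. M (i, j) * x j) + c" for M i
      by (simp add: Y_def c_def algebra_simps sum.distrib sum_distrib_left)
    define k0 where "k0 = nat \<lfloor>\<epsilon> * real m\<rfloor>"
    define g where "g = m - k0"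
    define \<G> where "\<G> = {G. G \<subseteq> {..<m} \<and> card G = g}"
    define E where "E = {M. shifted_norm (n - 1) n M s x \<le> w/2 * sqrt (\<epsilon> * real n)}"
    have k0m: "real k0 \<le> \<epsilon> * real m" unfolding k0_def using e0 by (intro of_nat_floor) simp
    have k0le: "k0 \<le> m"
    proof -
      have "\<epsilon> * real m \<le> real m" by (rule mult_left_le_one_le) (use e0 e1 in auto)
      then show ?thesis using k0m by linarith
    qed
    have incl: "E \<subseteq> (\<Union>G\<in>\<G>. {M. \<forall>i\<in>G. (\<lambda>j. M (i, j)) \<in> X})"
    proof
      fix M assume "M \<in> E"
      then have "sqrt (\<Sum>i<m. (Y M i)^2) \<le> w/2 * sqrt (\<epsilon> * real n)"
        by (simp add: E_def shifted_norm_def Y_def m_def)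
      also have "\<dots> = sqrt ((w/2)^2 * (\<epsilon> * real n))"
        using wpos by (simp add: real_sqrt_mult)
      finally have sq: "(\<Sum>i<m. (Y M i)^2) \<le> (w/2)^2 * (\<epsilon> * real n)" by simp
      define Bad where "Bad = {i\<in>{..<m}. w \<le> \<bar>Y M i\<bar>}"
      have "real (card Bad) * w^2 \<le> (\<Sum>i\<in>Bad. (Y M i)^2)"
      proof -
        have "real (card Bad) * w^2 \<le> (\<Sum>i\<in>Bad. (Y M i)^2)"
        proof (rule sum_bounded_below[where K="w^2", simplified])
          fix i assume "i \<in> Bad"
          then have "w \<le> \<bar>Y M i\<bar>" by (simp add: Bad_def)
          then have "w^2 \<le> \<bar>Y M i\<bar>^2" using wpos by (intro power_mono) auto
          then show "w^2 \<le> (Y M i)^2" by simp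
        qed
        then show ?thesis .
      qed
      also have "\<dots> \<le> (\<Sum>i<m. (Y M i)^2)"
        by (intro sum_mono2) (auto simp: Bad_def)
      also have "\<dots> \<le> w^2 * (\<epsilon> * real n / 4)" using sq by (simp add: power_divide)
      also have "\<dots> \<le> w^2 * (\<epsilon> * real m)"
      proof -
        have "real n / 4 \<le> real m" using n2 rm by simp
        then have "\<epsilon> * (real n / 4) \<le> \<epsilon> * real m" using e0 by (intro mult_left_mono) auto
        then show ?thesis using wpos by (intro mult_left_mono) auto
      qed
      finally have "real (card Bad) * w^2 \<le> (\<epsilon> * real m) * w^2" by (simp add: mult.commute)
      then have "real (card Bad) \<le> \<epsilon> * real m" using wpos by simp
      then have cB: "card Bad \<le> k0" unfolding k0_def by (rule le_nat_floor)
      define Good where "Good = {..<m} - Bad"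
      have "card Good = m - card Bad" unfolding Good_def
        by (subst card_Diff_subset) (auto simp: Bad_def)
      then have "g \<le> card Good" using cB by (simp add: g_def)
      then obtain G where G: "G \<subseteq> Good" "card G = g" by (meson obtain_subset_with_card_n)
      have "G \<in> \<G>" using G by (auto simp: \<G>_def Good_def)
      moreover have "\<forall>i\<in>G. (\<lambda>j. M (i, j)) \<in> X"
      proof
        fix i assume "i \<in> G"
        then have "i \<in> Good" using G by auto
        then have "\<bar>Y M i\<bar> < w" by (auto simp: Good_def Bad_def)
        then show "(\<lambda>j. M (i, j)) \<in> X" by (simp add: X_def Yeq)
      qed
      ultimately show "M \<in> (\<Union>G\<in>\<G>. {M. \<forall>i\<in>G. (\<lambda>j. M (i, j)) \<in> X})" by blast
    qed
    have fin\<G>: "finite \<G>" unfolding \<G>_def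
      by (rule finite_subset[of _ "Pow {..<m}"]) auto
    have "measure_pmf.prob (B1 p n) E \<le> measure_pmf.prob (B1 p n) (\<Union>G\<in>\<G>. {M. \<forall>i\<in>G. (\<lambda>j. M (i, j)) \<in> X})"
      using incl by (intro measure_pmf.finite_measure_mono) auto
    also have "\<dots> \<le> (\<Sum>G\<in>\<G>. measure_pmf.prob (B1 p n) {M. \<forall>i\<in>G. (\<lambda>j. M (i, j)) \<in> X})"
      by (intro measure_pmf.finite_measure_subadditive_finite fin\<G>) auto
    also have "\<dots> = (\<Sum>G\<in>\<G>. a ^ g)"
    proof (intro sum.cong refl)
      fix G assume "G \<in> \<G>"
      then have G: "G \<subseteq> {..<m}" "card G = g" by (auto simp: \<G>_def)
      show "measure_pmf.prob (B1 p n) {M. \<forall>i\<in>G. (\<lambda>j. M (i, j)) \<in> X} = a ^ g"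
        unfolding B1_def m_def[symmetric] a_def using rows_indep[OF G(1)] G(2) by simp
    qed
    also have "\<dots> = real (m choose g) * a ^ g"
      by (simp add: \<G>_def n_subsets)
    also have "m choose g = m choose k0"
      unfolding g_def by (rule binomial_symmetric[OF k0le, symmetric])
    also have "real (m choose k0) * a ^ g \<le> (exp 1 / \<epsilon>) powr (\<epsilon> * real m) * (1 - p) powr (real m * (1 - \<epsilon>))"
    proof (rule mult_mono)
      show "real (m choose k0) \<le> (exp 1 / \<epsilon>) powr (\<epsilon> * real m)"
        by (rule binom_bound[OF e0 e1 k0_def])
      have "a ^ g \<le> (1 - p) ^ g" using a0 a1 by (intro power_mono) auto
      also have "\<dots> = (1 - p) powr real g"
        using assms by (simp add: powr_realpow)
      also have "\<dots> \<le> (1 - p) powr (real m * (1 - \<epsilon>))"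
      proof (rule powr_mono')
        have "real g = real m - real k0" using k0le by (simp add: g_def of_nat_diff)
        then show "real m * (1 - \<epsilon>) \<le> real g" using k0m by (simp add: algebra_simps)
      qed (use assms in auto)
      finally show "a ^ g \<le> (1 - p) powr (real m * (1 - \<epsilon>))" .
    qed (auto simp: a0)
    finally show "measure_pmf.prob (B1 p n) {M. shifted_norm (n - 1) n M s x \<le> w / 2 * sqrt (\<epsilon> * real n)}
        \<le> (exp 1 / \<epsilon>) powr (\<epsilon> * (real n - 1)) * (1 - p) powr ((real n - 1) * (1 - \<epsilon>))"
      by (simp add: E_def rm)
  qed
qed


end
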